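(* Let $G$ be a strong $(\ell,d)$-graph. Then for any two strong $(\ell,d)$-partitions $\pi$ and $\pi'$ of $G$, the graphs $\phi(G,\pi)$ and $\phi(G,\pi')$ are identical.
   Context: For $U,W\subseteq V(G)$, $\Delta(U,W)=\max\{|N(u)\cap W|,|N(x)\cap U|:u\in U,x\in W\}$, and $\overline\Delta(U,W)$ likewise with $\overline N(v)=V(G)\setminus(N(v)\cup\{v\})$. A partition $\pi=\{V_1,\dots,V_{\ell'}\}$ of $V(G)$ is an $(\ell,d)$-partition if $\ell'\le\ell$ and every pair $(V_i,V_j)$ (not necessarily distinct) is $d$-sparse ($\Delta(V_i,V_j)\le d$) or $d$-dense ($\overline\Delta(V_i,V_j)\le d$); strong if each bag has at least $5\cdot2^\ell d$ vertices. The density graph $H(G,\pi)$ has vertex set $\{1,\dots,\ell'\}$, with edge $ij$ (a loop if $i=j$) iff $(V_i,V_j)$ is $d$-dense. For a graph $H'$ with loops on $\{1,\dots,\ell'\}$, $\psi(G,\pi,H')$ is obtained from $G$ by replacing, for each edge $ij$ of $H'$ with $i\ne j$, the bipartite graph between $V_i$ and $V_j$ by its bipartite complement, and, for each loop at $i$, $G[V_i]$ by its complement. Finally $\phi(G,\pi)=\psi(G,\pi,H(G,\pi))$. *)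

theory Defs
  imports "HOL-Library.Disjoint_Sets"
begin

definition simple_graph :: "'a set \<Rightarrow> 'a set set \<Rightarrow> bool" where
  "simple_graph V E \<longleftrightarrow> finite V \<and>
     (\<forall>e\<in>E. \<exists>u v. e = {u, v} \<and> u \<noteq> v \<and> u \<in> V \<and> v \<in> V)"

definition nbhd :: "'a set \<Rightarrow> 'a set set \<Rightarrow> 'a \<Rightarrow> 'a set" where
  "nbhd V E v = {u \<in> V. {u, v} \<in> E}"

definition nonnbhd :: "'a set \<Rightarrow> 'a set set \<Rightarrow> 'a \<Rightarrow> 'a set" where
  "nonnbhd V E v = V - (nbhd V E v \<union> {v})"

definition Delta :: "'a set \<Rightarrow> 'a set set \<Rightarrow> 'a set \<Rightarrow> 'a set \<Rightarrow> nat" where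
  "Delta V E U W = Max ({card (nbhd V E u \<inter> W) | u. u \<in> U} \<union>
                        {card (nbhd V E x \<inter> U) | x. x \<in> W})"

definition coDelta :: "'a set \<Rightarrow> 'a set set \<Rightarrow> 'a set \<Rightarrow> 'a set \<Rightarrow> nat" where
  "coDelta V E U W = Max ({card (nonnbhd V E u \<inter> W) | u. u \<in> U} \<union>
                          {card (nonnbhd V E x \<inter> U) | x. x \<in> W})"

definition d_sparse :: "'a set \<Rightarrow> 'a set set \<Rightarrow> nat \<Rightarrow> 'a set \<Rightarrow> 'a set \<Rightarrow> bool" where
  "d_sparse V E d U W \<longleftrightarrow> Delta V E U W \<le> d"

definition d_dense :: "'a set \<Rightarrow> 'a set set \<Rightarrow> nat \<Rightarrow> 'a set \<Rightarrow> 'a set \<Rightarrow> bool" where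
  "d_dense V E d U W \<longleftrightarrow> coDelta V E U W \<le> d"

definition ld_partition :: "'a set \<Rightarrow> 'a set set \<Rightarrow> nat \<Rightarrow> nat \<Rightarrow> 'a set set \<Rightarrow> bool" where
  "ld_partition V E l d P \<longleftrightarrow> partition_on V P \<and> card P \<le> l \<and>
     (\<forall>X\<in>P. \<forall>Y\<in>P. d_sparse V E d X Y \<or> d_dense V E d X Y)"

definition strong_ld_partition :: "'a set \<Rightarrow> 'a set set \<Rightarrow> nat \<Rightarrow> nat \<Rightarrow> 'a set set \<Rightarrow> bool" where
  "strong_ld_partition V E l d P \<longleftrightarrow> ld_partition V E l d P \<and>
     (\<forall>X\<in>P. card X \<ge> 5 * 2 ^ l * d)"

definition strong_ld_graph :: "'a set \<Rightarrow> 'a set set \<Rightarrow> nat \<Rightarrow> nat \<Rightarrow> bool" where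
  "strong_ld_graph V E l d \<longleftrightarrow> simple_graph V E \<and> (\<exists>P. strong_ld_partition V E l d P)"

text \<open>Edge set of psi(G,P,H'), where H' is given as a symmetric relation on bags
  (a loop at X being H' X X).  Vertex set stays V.\<close>
definition psi_edges :: "'a set \<Rightarrow> 'a set set \<Rightarrow> 'a set set \<Rightarrow> ('a set \<Rightarrow> 'a set \<Rightarrow> bool) \<Rightarrow> 'a set set" where
  "psi_edges V E P H' = {{u, v} | u v X Y. X \<in> P \<and> Y \<in> P \<and> u \<in> X \<and> v \<in> Y \<and> u \<noteq> v \<and>
                          ({u, v} \<in> E \<longleftrightarrow> \<not> H' X Y)}"

definition density_graph :: "'a set \<Rightarrow> 'a set set \<Rightarrow> nat \<Rightarrow> 'a set \<Rightarrow> 'a set \<Rightarrow> bool" where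
  "density_graph V E d X Y \<longleftrightarrow> d_dense V E d X Y"

definition phi_edges :: "'a set \<Rightarrow> 'a set set \<Rightarrow> nat \<Rightarrow> 'a set set \<Rightarrow> 'a set set" where
  "phi_edges V E d P = psi_edges V E P (density_graph V E d)"

end

theory Submission
  imports Defs
begin

lemma sparse_D:
  assumes "d_sparse V E d X Y" "finite X" "finite Y" "u \<in> X"
  shows "card (nbhd V E u \<inter> Y) \<le> d"
proof -
  have "card (nbhd V E u \<inter> Y) \<le> Delta V E X Y" unfolding Delta_def
    by (rule Max_ge) (use assms in auto)
  then show ?thesis using assms(1) unfolding d_sparse_def by simp
qed

lemma dense_D:
  assumes "d_dense V E d X Y" "finite X" "finite Y" "u \<in> X"
  shows "card (nonnbhd V E u \<inter> Y) \<le> d"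
proof -
  have "card (nonnbhd V E u \<inter> Y) \<le> coDelta V E X Y" unfolding coDelta_def
    by (rule Max_ge) (use assms in auto)
  then show ?thesis using assms(1) unfolding d_dense_def by simp
qed

lemma dense_sym: "d_dense V E d X Y = d_dense V E d Y X"
  unfolding d_dense_def coDelta_def by (simp add: Un_commute)

lemma sparse_sym: "d_sparse V E d X Y = d_sparse V E d Y X"
  unfolding d_sparse_def Delta_def by (simp add: Un_commute)

lemma cover:
  assumes "C \<subseteq> V" "finite V"
  shows "card C \<le> card (nbhd V E u \<inter> C) + card (nonnbhd V E u \<inter> C) + 1"
proof -
  have "C \<subseteq> (nbhd V E u \<inter> C) \<union> (nonnbhd V E u \<inter> C) \<union> {u}"
    using assms unfolding nbhd_def nonnbhd_def by auto
  then have "card C \<le> card ((nbhd V E u \<inter> C) \<union> (nonnbhd V E u \<inter> C) \<union> {u})"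
    using assms by (intro card_mono) (auto intro: finite_subset)
  also have "\<dots> \<le> card ((nbhd V E u \<inter> C) \<union> (nonnbhd V E u \<inter> C)) + card {u}"
    by (rule card_Un_le)
  also have "\<dots> \<le> card (nbhd V E u \<inter> C) + card (nonnbhd V E u \<inter> C) + 1"
    using card_Un_le by simp
  finally show ?thesis .
qed

lemma L0:
  assumes "finite V" "X \<subseteq> V" "Y \<subseteq> V" "X' \<subseteq> V" "Y' \<subseteq> V"
    "u \<in> X" "u \<in> X'" "C \<subseteq> Y" "C \<subseteq> Y'" "card C \<ge> 2*d+2"
    "d_dense V E d X Y" "d_sparse V E d X' Y'"
  shows False
proof -
  have fin: "finite X" "finite Y" "finite X'" "finite Y'"
    using assms finite_subset by auto
  have "card (nonnbhd V E u \<inter> C) \<le> card (nonnbhd V E u \<inter> Y)"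
    using assms fin by (intro card_mono) auto
  also have "\<dots> \<le> d" using dense_D[OF assms(11) fin(1,2) assms(6)] .
  finally have a: "card (nonnbhd V E u \<inter> C) \<le> d" .
  have "card (nbhd V E u \<inter> C) \<le> card (nbhd V E u \<inter> Y')"
    using assms fin by (intro card_mono) auto
  also have "\<dots> \<le> d" using sparse_D[OF assms(12) fin(3,4) assms(7)] .
  finally have b: "card (nbhd V E u \<inter> C) \<le> d" .
  have "card C \<le> card (nbhd V E u \<inter> C) + card (nonnbhd V E u \<inter> C) + 1"
    using cover[of C V E u] assms by auto
  with a b assms(10) show False by simp
qed

definition dich where
  "dich V E d P \<longleftrightarrow> (\<forall>X\<in>P. \<forall>Y\<in>P. d_sparse V E d X Y \<or> d_dense V E d X Y)"

lemma L:
  assumes "finite V" "partition_on V P" "partition_on V P'" "dich V E d P" "dich V E d P'"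
    "X \<in> P" "Y \<in> P" "X' \<in> P'" "Y' \<in> P'" "u \<in> X" "u \<in> X'" "card (Y \<inter> Y') \<ge> 2*d+2"
  shows "d_dense V E d X Y \<longleftrightarrow> d_dense V E d X' Y'"
proof -
  have sub: "X \<subseteq> V" "Y \<subseteq> V" "X' \<subseteq> V" "Y' \<subseteq> V"
    using assms partition_onD1 by blast+
  show ?thesis
  proof
    assume h: "d_dense V E d X Y"
    show "d_dense V E d X' Y'"
    proof (rule ccontr)
      assume "\<not> d_dense V E d X' Y'"
      then have "d_sparse V E d X' Y'" using assms(5,8,9) unfolding dich_def by blast
      then show False using L0[OF assms(1) sub assms(10,11), of "Y \<inter> Y'" d E] h assms(12) by auto
    qed
  next
    assume h: "d_dense V E d X' Y'"
    show "d_dense V E d X Y"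
    proof (rule ccontr)
      assume "\<not> d_dense V E d X Y"
      then have "d_sparse V E d X Y" using assms(4,6,7) unfolding dich_def by blast
      then show False using L0[OF assms(1) sub(3,4,1,2) assms(11,10), of "Y \<inter> Y'" d E] h assms(12)
        by (auto simp: Int_commute)
    qed
  qed
qed

lemma bigcell:
  assumes "finite V" "partition_on V P'" "card P' \<le> l" "Y \<subseteq> V" "card Y \<ge> 5 * 2 ^ l * d" "d \<ge> 1"
  shows "\<exists>W\<in>P'. card (Y \<inter> W) \<ge> 2*d+2"
proof (rule ccontr)
  assume "\<not> ?thesis"
  then have le: "\<And>W. W \<in> P' \<Longrightarrow> card (Y \<inter> W) \<le> 2*d+1" by force
  have finP: "finite P'" using assms(1,2) partition_onD1 finite_UnionD by metis
  have U: "\<Union>P' = V" using partition_onD1[OF assms(2)] by simp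
  have "Y = (\<Union>W\<in>P'. Y \<inter> W)" using assms(4) U by auto
  then have "card Y = card (\<Union>W\<in>P'. Y \<inter> W)" by simp
  also have "\<dots> \<le> (\<Sum>W\<in>P'. card (Y \<inter> W))" by (rule card_UN_le[OF finP])
  finally have "card Y \<le> (\<Sum>W\<in>P'. card (Y \<inter> W))" .
  also have "\<dots> \<le> card P' * (2*d+1)" using sum_bounded_above[of P' "\<lambda>W. card (Y \<inter> W)" "2*d+1"] le by simp
  also have "\<dots> \<le> l * (2*d+1)" using assms(3) by (rule mult_right_mono) simp
  also have "\<dots> \<le> l * (3*d)" using assms(6) by simp
  also have "\<dots> \<le> 2^l * (3*d)" using less_exp[of l] by (intro mult_right_mono) simp_all
  finally have "card Y \<le> 2^l * (3*d)" .
  moreover have "2^l * (3*d) < 5 * 2 ^ l * d" using assms(6) by simp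
  ultimately show False using assms(5) by linarith
qed

lemma d0:
  assumes "finite V" "X \<subseteq> V" "Y \<subseteq> V" "u \<in> X" "v \<in> Y" "u \<noteq> v"
    "d_sparse V E 0 X Y \<or> d_dense V E 0 X Y"
  shows "d_dense V E 0 X Y \<longleftrightarrow> {u, v} \<in> E"
proof -
  have fin: "finite X" "finite Y" using assms finite_subset by auto
  show ?thesis
  proof
    assume "d_dense V E 0 X Y"
    then have "card (nonnbhd V E u \<inter> Y) = 0" using dense_D fin assms(4) by fastforce
    then have "nonnbhd V E u \<inter> Y = {}" using fin by auto
    then show "{u,v} \<in> E" using assms unfolding nonnbhd_def nbhd_def by (auto simp: insert_commute)
  next
    assume e: "{u,v} \<in> E"
    show "d_dense V E 0 X Y"
    proof (rule ccontr)
      assume "\<not> d_dense V E 0 X Y"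
      then have "d_sparse V E 0 X Y" using assms by auto
      then have "card (nbhd V E u \<inter> Y) = 0" using sparse_D fin assms(4) by fastforce
      then have "nbhd V E u \<inter> Y = {}" using fin by auto
      then show False using assms e unfolding nbhd_def by (auto simp: insert_commute)
    qed
  qed
qed

lemma main_pair:
  assumes "finite V" "strong_ld_partition V E l d P" "strong_ld_partition V E l d P'"
    "X \<in> P" "Y \<in> P" "X' \<in> P'" "Y' \<in> P'" "u \<in> X" "u \<in> X'" "v \<in> Y" "v \<in> Y'" "u \<noteq> v"
  shows "d_dense V E d X Y \<longleftrightarrow> d_dense V E d X' Y'"
proof -
  have pP: "partition_on V P" "card P \<le> l" "dich V E d P" "\<forall>X\<in>P. card X \<ge> 5 * 2 ^ l * d"
    using assms(2) unfolding strong_ld_partition_def ld_partition_def dich_def by auto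
  have pP': "partition_on V P'" "card P' \<le> l" "dich V E d P'" "\<forall>X\<in>P'. card X \<ge> 5 * 2 ^ l * d"
    using assms(3) unfolding strong_ld_partition_def ld_partition_def dich_def by auto
  have sub: "X \<subseteq> V" "Y \<subseteq> V" "X' \<subseteq> V" "Y' \<subseteq> V"
    using assms pP(1) pP'(1) partition_onD1 by blast+
  show ?thesis
  proof (cases "d = 0")
    case True
    have "d_dense V E d X Y \<longleftrightarrow> {u, v} \<in> E"
      using d0[OF assms(1) sub(1,2) assms(8,10,12)] pP(3) assms(4,5) True unfolding dich_def by auto
    moreover have "d_dense V E d X' Y' \<longleftrightarrow> {u, v} \<in> E"
      using d0[OF assms(1) sub(3,4) assms(9,11,12)] pP'(3) assms(6,7) True unfolding dich_def by auto
    ultimately show ?thesis by simp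
  next
    case False
    then have d1: "d \<ge> 1" by simp
    obtain W where W: "W \<in> P'" "card (Y \<inter> W) \<ge> 2*d+2"
      using bigcell[OF assms(1) pP'(1,2) sub(2)] pP(4) assms(5) d1 by blast
    obtain Z where Z: "Z \<in> P" "card (X' \<inter> Z) \<ge> 2*d+2"
      using bigcell[OF assms(1) pP(1,2) sub(3)] pP'(4) assms(6) d1 by blast
    have "Y \<inter> W \<noteq> {}" using W(2) by auto
    then obtain w where w: "w \<in> Y" "w \<in> W" by auto
    have e1: "d_dense V E d X Y \<longleftrightarrow> d_dense V E d X' W"
      by (rule L[OF assms(1) pP(1) pP'(1) pP(3) pP'(3) assms(4,5,6) W(1) assms(8,9) W(2)])
    have e2: "d_dense V E d Y Z \<longleftrightarrow> d_dense V E d W X'"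
      by (rule L[OF assms(1) pP(1) pP'(1) pP(3) pP'(3) assms(5) Z(1) W(1) assms(6) w])
         (use Z(2) in \<open>simp add: Int_commute\<close>)
    have e3: "d_dense V E d Y Z \<longleftrightarrow> d_dense V E d Y' X'"
      by (rule L[OF assms(1) pP(1) pP'(1) pP(3) pP'(3) assms(5) Z(1) assms(7,6,10,11)])
         (use Z(2) in \<open>simp add: Int_commute\<close>)
    show ?thesis using e1 e2 e3 dense_sym by metis
  qed
qed

lemma phi_sub:
  assumes "finite V" "strong_ld_partition V E l d P" "strong_ld_partition V E l d P'"
  shows "phi_edges V E d P \<subseteq> phi_edges V E d P'"
proof
  fix e assume "e \<in> phi_edges V E d P"
  then obtain u v X Y where h: "e = {u,v}" "X \<in> P" "Y \<in> P" "u \<in> X" "v \<in> Y" "u \<noteq> v"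
    "({u, v} \<in> E \<longleftrightarrow> \<not> density_graph V E d X Y)"
    unfolding phi_edges_def psi_edges_def by blast
  have pP: "partition_on V P" "partition_on V P'"
    using assms(2,3) unfolding strong_ld_partition_def ld_partition_def by auto
  have "u \<in> V" "v \<in> V" using h pP(1) partition_onD1 by blast+
  then obtain X' Y' where X': "X' \<in> P'" "u \<in> X'" "Y' \<in> P'" "v \<in> Y'"
    using pP(2) partition_onD1 by blast
  have "d_dense V E d X Y \<longleftrightarrow> d_dense V E d X' Y'"
    by (rule main_pair[OF assms h(2,3) X'(1,3) h(4) X'(2) h(5) X'(4) h(6)])
  then have "({u, v} \<in> E \<longleftrightarrow> \<not> density_graph V E d X' Y')"
    using h(7) unfolding density_graph_def by simp
  then show "e \<in> phi_edges V E d P'"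
    unfolding phi_edges_def psi_edges_def using h X' by blast
qed

theorem proposition2p7:
  fixes V :: "'a set" and E :: "'a set set" and l d :: nat and P P' :: "'a set set"
  assumes "strong_ld_graph V E l d"
    and "strong_ld_partition V E l d P"
    and "strong_ld_partition V E l d P'"
  shows "phi_edges V E d P = phi_edges V E d P'"
proof -
  have "finite V" using assms(1) unfolding strong_ld_graph_def simple_graph_def by simp
  then show ?thesis using phi_sub assms(2,3) by blast
qed

end
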